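(* Let $\mathcal V\subseteq B(H)$ be an operator system and suppose $p\in\mathcal V$ is a projection in $B(H)$. Then $\{C(p_n)\}_n$ is a (not necessarily proper) matrix ordering on $\mathcal V$. Furthermore, if $q\in\mathcal V$ satisfies $p\le q\le I$, then $q$ is an Archimedean matrix order unit for $(\mathcal V,\{C(p_n)\}_n)$.
   Context: $p_n=I_n\otimes p$ and $C(p_n)=\{x\in M_n(\mathcal V): x=x^*,\ p_nxp_n\ge0\text{ in }B(H^n)\}$. A (not necessarily proper) matrix ordering is a sequence of cones $D_n\subseteq M_n(\mathcal V)_h$ with $\alpha^*D_n\alpha\subseteq D_m$ for all $\alpha\in M_{n,m}$. An element $u$ is an Archimedean matrix order unit for $\{D_n\}$ if for every hermitian $x\in M_n(\mathcal V)$ there is $r>0$ with $ru_n-x\in D_n$ ($u_n=I_n\otimes u$), and $x+\epsilon u_n\in D_n$ for all $\epsilon>0$ implies $x\in D_n$. *)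

theory Defs
  imports Complex_Main
begin

class complex_hilbert = ab_group_add +
  fixes scaleC :: "complex \<Rightarrow> 'a \<Rightarrow> 'a"
    and cinner :: "'a \<Rightarrow> 'a \<Rightarrow> complex"
  assumes scaleC_add_right: "scaleC a (x + y) = scaleC a x + scaleC a y"
    and scaleC_add_left: "scaleC (a + b) x = scaleC a x + scaleC b x"
    and scaleC_scaleC: "scaleC a (scaleC b x) = scaleC (a * b) x"
    and scaleC_one: "scaleC 1 x = x"
    and cinner_add_left: "cinner (x + y) z = cinner x z + cinner y z"
    and cinner_scaleC_left: "cinner (scaleC a x) y = a * cinner x y"
    and cinner_commute: "cinner y x = cnj (cinner x y)"
    and cinner_ge_zero: "0 \<le> Re (cinner x x)"
    and cinner_eq_zero_iff: "cinner x x = 0 \<longleftrightarrow> x = 0"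
    and cinner_complete:
      "(\<forall>e>0. \<exists>N::nat. \<forall>m\<ge>N. \<forall>n\<ge>N. sqrt (Re (cinner (X m - X n) (X m - X n))) < e)
       \<Longrightarrow> (\<exists>L. \<forall>e>0. \<exists>N::nat. \<forall>n\<ge>N. sqrt (Re (cinner (X n - L) (X n - L))) < e)"

definition cnorm :: "'a::complex_hilbert \<Rightarrow> real" where
  "cnorm x = sqrt (Re (cinner x x))"

definition bounded_op :: "('a::complex_hilbert \<Rightarrow> 'a) \<Rightarrow> bool" where
  "bounded_op T \<longleftrightarrow> (\<forall>x y. T (x + y) = T x + T y) \<and> (\<forall>c x. T (scaleC c x) = scaleC c (T x))
     \<and> (\<exists>K. \<forall>x. cnorm (T x) \<le> K * cnorm x)"

definition BH :: "('a::complex_hilbert \<Rightarrow> 'a) set" where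
  "BH = {T. bounded_op T}"

definition adj :: "('a::complex_hilbert \<Rightarrow> 'a) \<Rightarrow> ('a \<Rightarrow> 'a)" where
  "adj T = (THE S. \<forall>x y. cinner (T x) y = cinner x (S y))"

definition op_zero :: "'a::complex_hilbert \<Rightarrow> 'a" where
  "op_zero = (\<lambda>x. 0)"

definition op_add :: "('a::complex_hilbert \<Rightarrow> 'a) \<Rightarrow> ('a \<Rightarrow> 'a) \<Rightarrow> ('a \<Rightarrow> 'a)" where
  "op_add S T = (\<lambda>x. S x + T x)"

definition op_diff :: "('a::complex_hilbert \<Rightarrow> 'a) \<Rightarrow> ('a \<Rightarrow> 'a) \<Rightarrow> ('a \<Rightarrow> 'a)" where
  "op_diff S T = (\<lambda>x. S x - T x)"

definition op_scale :: "complex \<Rightarrow> ('a::complex_hilbert \<Rightarrow> 'a) \<Rightarrow> ('a \<Rightarrow> 'a)" where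
  "op_scale c T = (\<lambda>x. scaleC c (T x))"

definition op_pos :: "('a::complex_hilbert \<Rightarrow> 'a) \<Rightarrow> bool" where
  "op_pos T \<longleftrightarrow> T \<in> BH \<and> (\<forall>\<xi>. Im (cinner (T \<xi>) \<xi>) = 0 \<and> 0 \<le> Re (cinner (T \<xi>) \<xi>))"

definition op_le :: "('a::complex_hilbert \<Rightarrow> 'a) \<Rightarrow> ('a \<Rightarrow> 'a) \<Rightarrow> bool" where
  "op_le S T \<longleftrightarrow> op_pos (op_diff T S)"

definition is_projection :: "('a::complex_hilbert \<Rightarrow> 'a) \<Rightarrow> bool" where
  "is_projection p \<longleftrightarrow> p \<in> BH \<and> p \<circ> p = p \<and> adj p = p"

definition operator_system :: "('a::complex_hilbert \<Rightarrow> 'a) set \<Rightarrow> bool" where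
  "operator_system V \<longleftrightarrow> V \<subseteq> BH \<and> id \<in> V \<and> op_zero \<in> V
     \<and> (\<forall>S\<in>V. \<forall>T\<in>V. op_add S T \<in> V) \<and> (\<forall>c. \<forall>T\<in>V. op_scale c T \<in> V)
     \<and> (\<forall>T\<in>V. adj T \<in> V)"

text \<open>An n x n matrix over operators is a function nat \<Rightarrow> nat \<Rightarrow> op, with entries
  outside {0..<n} x {0..<n} equal to zero. Scalar n x m matrices are nat \<Rightarrow> nat \<Rightarrow> complex,
  likewise zero outside the index range.\<close>

definition mats :: "('a::complex_hilbert \<Rightarrow> 'a) set \<Rightarrow> nat \<Rightarrow> (nat \<Rightarrow> nat \<Rightarrow> 'a \<Rightarrow> 'a) set" where
  "mats V n = {x. (\<forall>i<n. \<forall>j<n. x i j \<in> V) \<and> (\<forall>i j. \<not> (i < n \<and> j < n) \<longrightarrow> x i j = op_zero)}"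

definition herm_mats :: "('a::complex_hilbert \<Rightarrow> 'a) set \<Rightarrow> nat \<Rightarrow> (nat \<Rightarrow> nat \<Rightarrow> 'a \<Rightarrow> 'a) set" where
  "herm_mats V n = {x \<in> mats V n. \<forall>i<n. \<forall>j<n. x i j = adj (x j i)}"

definition scalar_mats :: "nat \<Rightarrow> nat \<Rightarrow> (nat \<Rightarrow> nat \<Rightarrow> complex) set" where
  "scalar_mats n m = {\<alpha>. \<forall>i j. \<not> (i < n \<and> j < m) \<longrightarrow> \<alpha> i j = 0}"

definition mat_add :: "(nat \<Rightarrow> nat \<Rightarrow> 'a::complex_hilbert \<Rightarrow> 'a) \<Rightarrow> (nat \<Rightarrow> nat \<Rightarrow> 'a \<Rightarrow> 'a) \<Rightarrow> (nat \<Rightarrow> nat \<Rightarrow> 'a \<Rightarrow> 'a)" where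
  "mat_add x y = (\<lambda>i j. op_add (x i j) (y i j))"

definition mat_diff :: "(nat \<Rightarrow> nat \<Rightarrow> 'a::complex_hilbert \<Rightarrow> 'a) \<Rightarrow> (nat \<Rightarrow> nat \<Rightarrow> 'a \<Rightarrow> 'a) \<Rightarrow> (nat \<Rightarrow> nat \<Rightarrow> 'a \<Rightarrow> 'a)" where
  "mat_diff x y = (\<lambda>i j. op_diff (x i j) (y i j))"

definition mat_scaleR :: "real \<Rightarrow> (nat \<Rightarrow> nat \<Rightarrow> 'a::complex_hilbert \<Rightarrow> 'a) \<Rightarrow> (nat \<Rightarrow> nat \<Rightarrow> 'a \<Rightarrow> 'a)" where
  "mat_scaleR t x = (\<lambda>i j. op_scale (complex_of_real t) (x i j))"

definition ampl :: "nat \<Rightarrow> ('a::complex_hilbert \<Rightarrow> 'a) \<Rightarrow> (nat \<Rightarrow> nat \<Rightarrow> 'a \<Rightarrow> 'a)" where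
  "ampl n u = (\<lambda>i j. if i = j \<and> i < n then u else op_zero)"

text \<open>\<alpha>* x \<alpha> for \<alpha> an n x m scalar matrix and x an n x n operator matrix.\<close>
definition congr :: "nat \<Rightarrow> nat \<Rightarrow> (nat \<Rightarrow> nat \<Rightarrow> complex) \<Rightarrow> (nat \<Rightarrow> nat \<Rightarrow> 'a::complex_hilbert \<Rightarrow> 'a)
    \<Rightarrow> (nat \<Rightarrow> nat \<Rightarrow> 'a \<Rightarrow> 'a)" where
  "congr n m \<alpha> x = (\<lambda>k l. if k < m \<and> l < m
      then (\<lambda>\<xi>. \<Sum>i<n. \<Sum>j<n. scaleC (cnj (\<alpha> i k) * \<alpha> j l) (x i j \<xi>))
      else op_zero)"

text \<open>Positivity of an n x n operator matrix as an operator on H^n.\<close>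
definition mat_pos :: "nat \<Rightarrow> (nat \<Rightarrow> nat \<Rightarrow> 'a::complex_hilbert \<Rightarrow> 'a) \<Rightarrow> bool" where
  "mat_pos n X \<longleftrightarrow> (\<forall>\<xi> :: nat \<Rightarrow> 'a.
     Im (\<Sum>i<n. \<Sum>j<n. cinner (X i j (\<xi> j)) (\<xi> i)) = 0 \<and>
     0 \<le> Re (\<Sum>i<n. \<Sum>j<n. cinner (X i j (\<xi> j)) (\<xi> i)))"

definition Cp :: "('a::complex_hilbert \<Rightarrow> 'a) set \<Rightarrow> ('a \<Rightarrow> 'a) \<Rightarrow> nat \<Rightarrow> (nat \<Rightarrow> nat \<Rightarrow> 'a \<Rightarrow> 'a) set" where
  "Cp V p n = {x \<in> herm_mats V n. mat_pos n (\<lambda>i j. p \<circ> x i j \<circ> p)}"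

definition is_cone :: "(nat \<Rightarrow> nat \<Rightarrow> 'a::complex_hilbert \<Rightarrow> 'a) set \<Rightarrow> bool" where
  "is_cone C \<longleftrightarrow> (\<forall>x\<in>C. \<forall>y\<in>C. mat_add x y \<in> C) \<and> (\<forall>t\<ge>0. \<forall>x\<in>C. mat_scaleR t x \<in> C)"

text \<open>(Not necessarily proper) matrix ordering; n ranges over positive integers.\<close>
definition matrix_ordering :: "('a::complex_hilbert \<Rightarrow> 'a) set \<Rightarrow> (nat \<Rightarrow> (nat \<Rightarrow> nat \<Rightarrow> 'a \<Rightarrow> 'a) set) \<Rightarrow> bool" where
  "matrix_ordering V D \<longleftrightarrow> (\<forall>n\<ge>1. D n \<subseteq> herm_mats V n \<and> is_cone (D n)
     \<and> (\<forall>m\<ge>1. \<forall>\<alpha>\<in>scalar_mats n m. \<forall>x\<in>D n. congr n m \<alpha> x \<in> D m))"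

definition archimedean_matrix_order_unit ::
  "('a::complex_hilbert \<Rightarrow> 'a) set \<Rightarrow> (nat \<Rightarrow> (nat \<Rightarrow> nat \<Rightarrow> 'a \<Rightarrow> 'a) set) \<Rightarrow> ('a \<Rightarrow> 'a) \<Rightarrow> bool" where
  "archimedean_matrix_order_unit V D u \<longleftrightarrow> u \<in> V \<and> (\<forall>n\<ge>1.
     (\<forall>x\<in>herm_mats V n. \<exists>r>0. mat_diff (mat_scaleR r (ampl n u)) x \<in> D n) \<and>
     (\<forall>x\<in>herm_mats V n. (\<forall>\<epsilon>>0. mat_add x (mat_scaleR \<epsilon> (ampl n u)) \<in> D n) \<longrightarrow> x \<in> D n))"

end

theory Submission
  imports Defs
begin


lemma scaleC_zero_left[simp]: "scaleC 0 (x::'a::complex_hilbert) = 0"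
  using scaleC_add_left[of 0 0 x] by simp
lemma scaleC_zero_right[simp]: "scaleC a (0::'a::complex_hilbert) = 0"
  using scaleC_add_right[of a 0 0] by simp
lemma scaleC_minus_left: "scaleC (-a) (x::'a::complex_hilbert) = - scaleC a x"
  using scaleC_add_left[of a "-a" x] by (simp add: eq_neg_iff_add_eq_0 add.commute)
lemma scaleC_minus_right: "scaleC a (-x::'a::complex_hilbert) = - scaleC a x"
  using scaleC_add_right[of a x "-x"] by (simp add: eq_neg_iff_add_eq_0 add.commute)
lemma scaleC_diff_right: "scaleC a (x - y::'a::complex_hilbert) = scaleC a x - scaleC a y"
  using scaleC_add_right[of a x "-y"] by (simp add: scaleC_minus_right)
lemma scaleC_diff_left: "scaleC (a - b) (x::'a::complex_hilbert) = scaleC a x - scaleC b x"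
  using scaleC_add_left[of a "-b" x] by (simp add: scaleC_minus_left)
lemma scaleC_sum_right: "scaleC a (sum f A) = (\<Sum>i\<in>A. scaleC a (f i::'a::complex_hilbert))"
  by (induct A rule: infinite_finite_induct) (simp_all add: scaleC_add_right)
lemma scaleC_sum_left: "scaleC (sum f A) (x::'a::complex_hilbert) = (\<Sum>i\<in>A. scaleC (f i) x)"
  by (induct A rule: infinite_finite_induct) (simp_all add: scaleC_add_left)

lemma cinner_zero_left[simp]: "cinner (0::'a::complex_hilbert) y = 0"
  using cinner_add_left[of 0 0 y] by simp
lemma cinner_minus_left: "cinner (- x::'a::complex_hilbert) y = - cinner x y"
  using cinner_add_left[of x "-x" y] by (simp add: eq_neg_iff_add_eq_0 add.commute)
lemma cinner_diff_left: "cinner (x - z::'a::complex_hilbert) y = cinner x y - cinner z y"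
  using cinner_add_left[of x "-z" y] by (simp add: cinner_minus_left)
lemma cinner_sum_left: "cinner (sum f A) (y::'a::complex_hilbert) = (\<Sum>i\<in>A. cinner (f i) y)"
  by (induct A rule: infinite_finite_induct) (simp_all add: cinner_add_left)
lemma cinner_zero_right[simp]: "cinner (x::'a::complex_hilbert) 0 = 0"
  by (subst cinner_commute) simp
lemma cinner_add_right: "cinner (x::'a::complex_hilbert) (y + z) = cinner x y + cinner x z"
  by (subst (1 2 3) cinner_commute) (simp add: cinner_add_left)
lemma cinner_scaleC_right: "cinner (x::'a::complex_hilbert) (scaleC a y) = cnj a * cinner x y"
  by (subst (1 2) cinner_commute) (simp add: cinner_scaleC_left)
lemma cinner_minus_right: "cinner (x::'a::complex_hilbert) (- y) = - cinner x y"
  by (subst (1 2) cinner_commute) (simp add: cinner_minus_left)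
lemma cinner_diff_right: "cinner (x::'a::complex_hilbert) (y - z) = cinner x y - cinner x z"
  by (subst (1 2 3) cinner_commute) (simp add: cinner_diff_left)
lemma cinner_sum_right: "cinner (x::'a::complex_hilbert) (sum f A) = (\<Sum>i\<in>A. cinner x (f i))"
  by (induct A rule: infinite_finite_induct) (simp_all add: cinner_add_right)

lemma cinner_self_Im[simp]: "Im (cinner (x::'a::complex_hilbert) x) = 0"
proof -
  have "Im (cinner x x) = Im (cnj (cinner x x))" using cinner_commute[of x x] by simp
  then show ?thesis by simp
qed
lemma cinner_self_real: "cinner (x::'a::complex_hilbert) x = complex_of_real (Re (cinner x x))"
  by (simp add: complex_eq_iff)

lemma cnorm_ge0: "0 \<le> cnorm x" using cinner_ge_zero[of x] by (simp add: cnorm_def)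
lemma cnorm_sq: "(cnorm x)^2 = Re (cinner x x)" using cinner_ge_zero[of x] by (simp add: cnorm_def)


lemma cinner_self_expand:
  "cinner (x + scaleC t y) (x + scaleC t (y::'a::complex_hilbert)) =
   cinner x x + t * cinner y x + cnj (t * cinner y x) + t * cnj t * cinner y y"
  apply (simp add: cinner_add_left cinner_add_right cinner_scaleC_left cinner_scaleC_right)
  apply (subst cinner_commute[of y x]) apply (simp add: algebra_simps)
  done

lemma Re_cinner_self_expand:
  "Re (cinner (x + scaleC t y) (x + scaleC t (y::'a::complex_hilbert))) =
   Re (cinner x x) + 2 * Re (t * cinner y x) + (cmod t)^2 * Re (cinner y y)"
proof -
  have "t * cnj t = complex_of_real ((cmod t)^2)" by (rule complex_norm_square[symmetric])
  then have "Re (t * cnj t * cinner y y) = (cmod t)^2 * Re (cinner y y)"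
    by simp
  then show ?thesis by (simp add: cinner_self_expand)
qed

lemma cauchy_schwarz: "cmod (cinner (a::'a::complex_hilbert) b) \<le> cnorm a * cnorm b"
proof (cases "b = 0")
  case True then show ?thesis by (simp add: cnorm_def)
next
  case False
  define Nb where "Nb = Re (cinner b b)"
  have "cinner b b \<noteq> 0" using False cinner_eq_zero_iff by blast
  then have Nbpos: "Nb > 0" unfolding Nb_def using cinner_ge_zero[of b] cinner_self_real[of b]
    by (metis of_real_eq_0_iff order_le_less)
  define c where "c = cinner a b"
  define t where "t = - c / complex_of_real Nb"
  have "0 \<le> Re (cinner (a + scaleC t b) (a + scaleC t b))" by (rule cinner_ge_zero)
  also have "\<dots> = Re (cinner a a) + 2 * Re (t * cinner b a) + (cmod t)^2 * Nb"
    unfolding Nb_def by (rule Re_cinner_self_expand)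
  also have "cinner b a = cnj c" unfolding c_def by (rule cinner_commute)
  also have "Re (t * cnj c) = -((cmod c)^2 / Nb)"
    unfolding t_def by (simp add: complex_norm_square[symmetric] Re_divide_of_real)
  also have "(cmod t)^2 = (cmod c)^2 / Nb^2"
    unfolding t_def using Nbpos by (simp add: norm_divide power_divide)
  finally have "0 \<le> Re (cinner a a) - (cmod c)^2 / Nb"
    using Nbpos by (simp add: power2_eq_square field_simps)
  then have "(cmod c)^2 \<le> Re (cinner a a) * Nb" using Nbpos by (simp add: field_simps)
  also have "\<dots> = (cnorm a * cnorm b)^2" by (simp add: power_mult_distrib cnorm_sq Nb_def)
  finally show ?thesis unfolding c_def
    using cnorm_ge0 by (meson mult_nonneg_nonneg power2_le_imp_le)
qed

lemma Re_cinner_le: "Re (cinner (a::'a::complex_hilbert) b) \<le> cnorm a * cnorm b"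
  using cauchy_schwarz[of a b] complex_Re_le_cmod order_trans by blast

lemma cnorm_triangle: "cnorm (a + b::'a::complex_hilbert) \<le> cnorm a + cnorm b"
proof -
  have "Re (cinner (a+b) (a+b)) = Re (cinner a a) + 2 * Re (cinner a b) + Re (cinner b b)"
    using Re_cinner_self_expand[of a 1 b] cinner_commute[of a b] by (simp add: scaleC_one)
  also have "\<dots> \<le> (cnorm a + cnorm b)^2"
    using Re_cinner_le[of a b] by (simp add: power2_sum cnorm_sq)
  finally have "(cnorm (a+b))^2 \<le> (cnorm a + cnorm b)^2" by (simp add: cnorm_sq)
  then show ?thesis using cnorm_ge0 by (meson add_nonneg_nonneg power2_le_imp_le)
qed

lemma parallelogram:
  "Re (cinner (a - b) (a - b)) + Re (cinner (a + b) (a + (b::'a::complex_hilbert))) =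
   2 * Re (cinner a a) + 2 * Re (cinner b b)"
  by (simp add: cinner_add_left cinner_add_right cinner_diff_left cinner_diff_right)


lemma Re_cinner_scaleC_self:
  "Re (cinner (scaleC c x) (scaleC c (x::'a::complex_hilbert))) = (cmod c)^2 * Re (cinner x x)"
  using Re_cinner_self_expand[of 0 c x] by simp

lemma my_Lim_null_comparison:
  fixes f :: "'a \<Rightarrow> 'b::real_normed_vector"
  assumes "eventually (\<lambda>x. norm (f x) \<le> g x) net" "(g \<longlongrightarrow> 0) net"
  shows "(f \<longlongrightarrow> 0) net"
  using assms(2)
proof (rule metric_tendsto_imp_tendsto)
  show "eventually (\<lambda>x. dist (f x) 0 \<le> dist (g x) 0) net"
    using assms(1) by (rule eventually_mono) (simp add: dist_norm)
qed

lemma riesz: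
  fixes f :: "'a::complex_hilbert \<Rightarrow> complex"
  assumes add: "\<And>x y. f (x+y) = f x + f y" and sc: "\<And>c x. f (scaleC c x) = c * f x"
   and bd: "\<And>x. cmod (f x) \<le> C * cnorm x"
  shows "\<exists>y. \<forall>x. f x = cinner x y"
proof (cases "\<forall>x. f x = 0")
  case True then show ?thesis by (intro exI[of _ 0]) simp
next
  case False
  then obtain x0 where x0: "f x0 \<noteq> 0" by blast
  have f0: "f 0 = 0" using add[of 0 0] by simp
  have fdiff: "f (x - y) = f x - f y" for x y
    using add[of x "-y"] sc[of "-1" y] scaleC_minus_left[of 1 y] by (simp add: scaleC_one)
  define C' where "C' = max C 0"
  have bd': "cmod (f x) \<le> C' * cnorm x" for x
    using bd[of x] cnorm_ge0[of x] unfolding C'_def by (meson max.cobounded1 mult_right_mono order_trans)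
  have C'0: "C' \<ge> 0" unfolding C'_def by simp
  define A where "A = {x. f x = 1}"
  define Nf where "Nf = (\<lambda>x::'a. Re (cinner x x))"
  define d where "d = Inf (Nf ` A)"
  have x1: "scaleC (1 / f x0) x0 \<in> A" using x0 by (simp add: A_def sc)
  have bdd: "bdd_below (Nf ` A)" unfolding Nf_def by (rule bdd_belowI[of _ 0]) (auto simp: cinner_ge_zero)
  have dle: "d \<le> Nf x" if "x \<in> A" for x unfolding d_def using bdd that by (simp add: cInf_lower)
  have "\<exists>x\<in>A. Nf x < d + 1 / Suc k" for k :: nat
  proof -
    have "Inf (Nf ` A) < d + 1 / Suc k" unfolding d_def by simp
    then obtain y where "y \<in> Nf ` A" "y < d + 1 / Suc k" using cInf_lessD[of "Nf ` A"] x1 by blast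
    then show ?thesis by blast
  qed
  then obtain X where X: "\<And>k. X k \<in> A" "\<And>k. Nf (X k) < d + 1 / Suc k" by metis
  have mid: "4 * d \<le> Nf (a + b)" if "a \<in> A" "b \<in> A" for a b
  proof -
    have "scaleC (1/2) (a + b) \<in> A" using that by (simp add: A_def sc add)
    then have "d \<le> Nf (scaleC (1/2) (a + b))" by (rule dle)
    also have "\<dots> = Nf (a + b) / 4" unfolding Nf_def by (simp add: Re_cinner_scaleC_self power2_eq_square)
    finally show ?thesis by simp
  qed
  have XX: "Nf (X m - X n) \<le> 2 / Suc m + 2 / Suc n" for m n
    using parallelogram[of "X m" "X n"] mid[OF X(1) X(1), of m n] X(2)[of m] X(2)[of n]
    unfolding Nf_def by linarith
  have cauchy: "\<forall>e>0. \<exists>N::nat. \<forall>m\<ge>N. \<forall>n\<ge>N. sqrt (Re (cinner (X m - X n) (X m - X n))) < e"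
  proof (intro allI impI)
    fix e :: real assume e: "e > 0"
    obtain N :: nat where N: "4 / e^2 < N" using reals_Archimedean2 by blast
    have "4 / Suc N < e^2" using N e
      by (smt (verit) divide_less_eq of_nat_0_le_iff of_nat_Suc zero_less_power mult.commute pos_divide_less_eq)
    show "\<exists>N::nat. \<forall>m\<ge>N. \<forall>n\<ge>N. sqrt (Re (cinner (X m - X n) (X m - X n))) < e"
    proof (intro exI[of _ N] allI impI)
      fix m n :: nat assume mn: "N \<le> m" "N \<le> n"
      have "2 / Suc m \<le> 2 / Suc N" "2 / Suc n \<le> 2 / Suc N" using mn by (simp_all add: frac_le)
      then have "Nf (X m - X n) < e^2" using XX[of m n] \<open>4 / Suc N < e^2\<close> by linarith
      then show "sqrt (Re (cinner (X m - X n) (X m - X n))) < e"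
        unfolding Nf_def using e by (metis abs_of_pos real_sqrt_abs real_sqrt_less_mono)
    qed
  qed
  obtain L where L: "\<forall>e>0. \<exists>N::nat. \<forall>n\<ge>N. sqrt (Re (cinner (X n - L) (X n - L))) < e"
    using cinner_complete[OF cauchy] by blast
  have Lim1: "(\<lambda>n. cnorm (X n - L)) \<longlonglongrightarrow> 0"
    unfolding LIMSEQ_iff using L by (simp add: cnorm_def cinner_ge_zero)
  have "(\<lambda>n. f (X n) - f L) \<longlonglongrightarrow> 0"
  proof (rule my_Lim_null_comparison)
    show "\<forall>\<^sub>F n in sequentially. norm (f (X n) - f L) \<le> C' * cnorm (X n - L)"
      using bd' by (simp add: fdiff[symmetric])
    show "(\<lambda>n. C' * cnorm (X n - L)) \<longlonglongrightarrow> 0" using tendsto_mult_right_zero[OF Lim1] by simp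
  qed
  moreover have "(\<lambda>n. f (X n) - f L) = (\<lambda>n. 1 - f L)" using X(1) by (simp add: A_def)
  ultimately have fL: "f L = 1" by (simp add: LIMSEQ_const_iff)
  have "(\<lambda>n. cnorm (X n) - cnorm L) \<longlonglongrightarrow> 0"
  proof (rule my_Lim_null_comparison)
    show "\<forall>\<^sub>F n in sequentially. norm (cnorm (X n) - cnorm L) \<le> cnorm (X n - L)"
    proof (intro always_eventually allI)
      fix n
      have "cnorm (X n) \<le> cnorm (X n - L) + cnorm L" using cnorm_triangle[of "X n - L" L] by simp
      moreover have "cnorm L \<le> cnorm (X n) + cnorm (L - X n)" using cnorm_triangle[of "X n" "L - X n"] by simp
      moreover have "cnorm (L - X n) = cnorm (X n - L)"
        using Re_cinner_scaleC_self[of "-1" "X n - L"] scaleC_minus_left[of 1 "X n - L"]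
        by (simp add: cnorm_def scaleC_one)
      ultimately show "norm (cnorm (X n) - cnorm L) \<le> cnorm (X n - L)" by simp
    qed
    show "(\<lambda>n. cnorm (X n - L)) \<longlonglongrightarrow> 0" by (rule Lim1)
  qed
  then have "(\<lambda>n. cnorm (X n)) \<longlonglongrightarrow> cnorm L" by (simp add: LIM_zero_iff)
  then have "(\<lambda>n. (cnorm (X n))^2) \<longlonglongrightarrow> (cnorm L)^2" by (intro tendsto_power)
  then have T1: "(\<lambda>n. Nf (X n)) \<longlonglongrightarrow> Nf L" by (simp add: cnorm_sq Nf_def)
  have T2: "(\<lambda>n. Nf (X n)) \<longlonglongrightarrow> d"
  proof (rule tendsto_sandwich[of "\<lambda>n. d" _ _ "\<lambda>n. d + inverse (real (Suc n))"])
    show "\<forall>\<^sub>F n in sequentially. d \<le> Nf (X n)" using dle X(1) by simp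
    show "\<forall>\<^sub>F n in sequentially. Nf (X n) \<le> d + inverse (real (Suc n))"
      using X(2) by (simp add: inverse_eq_divide less_imp_le)
    show "(\<lambda>n. d) \<longlonglongrightarrow> d" by simp
    show "(\<lambda>n. d + inverse (real (Suc n))) \<longlonglongrightarrow> d"
      using tendsto_add[OF tendsto_const LIMSEQ_inverse_real_of_nat, of d] by simp
  qed
  have NL: "Nf L = d" using LIMSEQ_unique[OF T1 T2] .
  have orth: "cinner w L = 0" if w: "f w = 0" for w
  proof (rule ccontr)
    assume cne: "cinner w L \<noteq> 0"
    define c where "c = cinner w L"
    define s where "s = 1 / (Nf w + 1)"
    have Nw: "Nf w \<ge> 0" unfolding Nf_def by (rule cinner_ge_zero)
    have s: "s > 0" unfolding s_def using Nw by simp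
    define t where "t = - complex_of_real s * cnj c"
    have "L + scaleC t w \<in> A" using fL w by (simp add: A_def add sc)
    then have "d \<le> Nf (L + scaleC t w)" by (rule dle)
    also have "\<dots> = Nf L + 2 * Re (t * cinner w L) + (cmod t)^2 * Nf w"
      unfolding Nf_def by (rule Re_cinner_self_expand)
    also have "t * cinner w L = - complex_of_real (s * (cmod c)^2)"
      unfolding t_def c_def by (simp add: mult.commute) (metis complex_norm_square of_real_power)
    also have "cmod t = s * cmod c" unfolding t_def using s by (simp add: norm_mult)
    finally have "0 \<le> - 2 * (s * (cmod c)^2) + (s * cmod c)^2 * Nf w" using NL by simp
    then have "0 \<le> s * (cmod c)^2 * (s * Nf w - 2)" by (simp add: algebra_simps power2_eq_square)
    moreover have "s * (cmod c)^2 > 0" using s cne c_def by simp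
    ultimately have "s * Nf w - 2 \<ge> 0" by (simp add: zero_le_mult_iff)
    moreover have "s * Nf w < 1" unfolding s_def using Nw by simp
    ultimately show False by simp
  qed
  have L0: "L \<noteq> 0" using fL f0 by auto
  have NL0: "Nf L \<noteq> 0" using L0 cinner_eq_zero_iff[of L] cinner_self_real[of L] unfolding Nf_def by fastforce
  show ?thesis
  proof (intro exI[of _ "scaleC (complex_of_real (1 / Nf L)) L"] allI)
    fix x
    have "f (x - scaleC (f x) L) = 0" by (simp add: fdiff sc fL)
    then have "cinner (x - scaleC (f x) L) L = 0" by (rule orth)
    then have "cinner x L = f x * complex_of_real (Nf L)"
      by (simp add: cinner_diff_left cinner_scaleC_left Nf_def cinner_self_real[of L, symmetric])
    then show "f x = cinner x (scaleC (complex_of_real (1 / Nf L)) L)"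
      using NL0 by (simp add: cinner_scaleC_right)
  qed
qed


definition hadj :: "('a::complex_hilbert \<Rightarrow> 'a) \<Rightarrow> ('a \<Rightarrow> 'a) \<Rightarrow> bool" where
  "hadj T S \<longleftrightarrow> (\<forall>x y. cinner (T x) y = cinner x (S y))"

lemma adj_unique:
  assumes "hadj T S" shows "adj T = S"
  unfolding adj_def
proof (rule the_equality)
  show "\<forall>x y. cinner (T x) y = cinner x (S y)" using assms by (simp add: hadj_def)
next
  fix S' assume S': "\<forall>x y. cinner (T x) y = cinner x (S' y)"
  show "S' = S"
  proof
    fix y
    have "cinner x (S' y - S y) = 0" for x
      using S' assms by (simp add: hadj_def cinner_diff_right)
    from this[of "S' y - S y"] have "S' y - S y = 0" using cinner_eq_zero_iff by blast
    then show "S' y = S y" by simp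
  qed
qed

lemma BH_add: "T \<in> BH \<Longrightarrow> T (x + y) = T x + T y" by (simp add: BH_def bounded_op_def)
lemma BH_scaleC: "T \<in> BH \<Longrightarrow> T (scaleC c x) = scaleC c (T x)" by (simp add: BH_def bounded_op_def)
lemma BH_zero: "T \<in> BH \<Longrightarrow> T 0 = 0" using BH_add[of T 0 0] by simp
lemma BH_minus: "T \<in> BH \<Longrightarrow> T (- x) = - T x"
  using BH_add[of T x "-x"] BH_zero[of T] by (simp add: eq_neg_iff_add_eq_0 add.commute)
lemma BH_diff: "T \<in> BH \<Longrightarrow> T (x - y) = T x - T y"
  using BH_add[of T x "-y"] BH_minus[of T y] by simp
lemma BH_sum: "T \<in> BH \<Longrightarrow> T (sum f A) = (\<Sum>i\<in>A. T (f i))"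
  by (induct A rule: infinite_finite_induct) (simp_all add: BH_zero BH_add)
lemma BH_bound: "T \<in> BH \<Longrightarrow> \<exists>K>0. \<forall>x. cnorm (T x) \<le> K * cnorm x"
proof -
  assume "T \<in> BH"
  then obtain K where K: "\<forall>x. cnorm (T x) \<le> K * cnorm x" by (auto simp: BH_def bounded_op_def)
  have "cnorm (T x) \<le> (\<bar>K\<bar> + 1) * cnorm x" for x
    using K[rule_format, of x] cnorm_ge0[of x]
    by (metis abs_ge_self add.commute add_increasing mult_right_mono order_trans zero_le_one)
  then show ?thesis by (intro exI[of _ "\<bar>K\<bar>+1"]) auto
qed

lemma adj_exists:
  assumes T: "T \<in> BH" shows "hadj T (adj T)"
proof -
  obtain K where K: "\<forall>x. cnorm (T x) \<le> K * cnorm x" "K > 0" using BH_bound[OF T] by blast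
  have "\<exists>z. \<forall>x. cinner (T x) y = cinner x z" for y
  proof (rule riesz)
    show "cinner (T (x + x')) y = cinner (T x) y + cinner (T x') y" for x x'
      using T by (simp add: BH_add cinner_add_left)
    show "cinner (T (scaleC c x)) y = c * cinner (T x) y" for c x
      using T by (simp add: BH_scaleC cinner_scaleC_left)
    show "cmod (cinner (T x) y) \<le> (K * cnorm y) * cnorm x" for x
    proof -
      have "cmod (cinner (T x) y) \<le> cnorm (T x) * cnorm y" by (rule cauchy_schwarz)
      also have "\<dots> \<le> K * cnorm x * cnorm y" using K cnorm_ge0[of y] by (simp add: mult_right_mono)
      finally show ?thesis by (simp add: algebra_simps)
    qed
  qed
  then obtain S where "\<forall>y x. cinner (T x) y = cinner x (S y)" by metis
  then have "hadj T S" by (simp add: hadj_def)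
  then show ?thesis using adj_unique by metis
qed

lemma op_pos_hadj:
  assumes P: "op_pos T" shows "hadj T T"
proof -
  have T: "T \<in> BH" using P by (simp add: op_pos_def)
  define B where "B = (\<lambda>x y. cinner (T x) y - cinner x (T y))"
  have B0: "B x x = 0" for x
  proof -
    have "Im (cinner (T x) x) = 0" using P by (simp add: op_pos_def)
    then have "cinner x (T x) = cinner (T x) x"
      by (subst cinner_commute) (simp add: complex_eq_iff)
    then show ?thesis by (simp add: B_def)
  qed
  have Badd: "B (x + y) (x + y) = B x x + B x y + B y x + B y y" for x y
    using T by (simp add: B_def BH_add cinner_add_left cinner_add_right algebra_simps)
  have Bsc: "B x (scaleC c y) = cnj c * B x y" "B (scaleC c x) y = c * B x y" for x y c
    using T by (simp_all add: B_def BH_scaleC cinner_scaleC_left cinner_scaleC_right algebra_simps)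
  have "B x y = 0" for x y
  proof -
    have 1: "B x y + B y x = 0" using Badd[of x y] B0 by simp
    have "B x (scaleC \<i> y) + B (scaleC \<i> y) x = 0" using Badd[of x "scaleC \<i> y"] B0 by simp
    then have 2: "- \<i> * B x y + \<i> * B y x = 0" by (simp add: Bsc)
    then have "\<i> * (B y x - B x y) = 0" by (simp add: algebra_simps)
    then have "B y x = B x y" by simp
    with 1 show ?thesis by simp
  qed
  then show ?thesis by (simp add: hadj_def B_def)
qed

lemma hadj_zero: "hadj op_zero op_zero" by (simp add: hadj_def op_zero_def)
lemma hadj_id: "hadj id id" by (simp add: hadj_def)
lemma hadj_add: "hadj S S' \<Longrightarrow> hadj T T' \<Longrightarrow> hadj (op_add S T) (op_add S' T')"
  by (simp add: hadj_def op_add_def cinner_add_left cinner_add_right)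
lemma hadj_diff: "hadj S S' \<Longrightarrow> hadj T T' \<Longrightarrow> hadj (op_diff S T) (op_diff S' T')"
  by (simp add: hadj_def op_diff_def cinner_diff_left cinner_diff_right)
lemma hadj_scale: "hadj S S' \<Longrightarrow> hadj (op_scale c S) (op_scale (cnj c) S')"
  by (simp add: hadj_def op_scale_def cinner_scaleC_left cinner_scaleC_right)
lemma hadj_sum: "(\<And>i. i \<in> A \<Longrightarrow> hadj (f i) (g i)) \<Longrightarrow>
   hadj (\<lambda>x. \<Sum>i\<in>A. f i x) (\<lambda>x. \<Sum>i\<in>A. g i x)"
  by (simp add: hadj_def cinner_sum_left cinner_sum_right)
lemma hadj_scale': "hadj S S' \<Longrightarrow> hadj (\<lambda>x. scaleC c (S x)) (\<lambda>x. scaleC (cnj c) (S' x))"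
  by (simp add: hadj_def op_scale_def cinner_scaleC_left cinner_scaleC_right)



lemma os_BH: "operator_system V \<Longrightarrow> V \<subseteq> BH" by (simp add: operator_system_def)
lemma os_zero: "operator_system V \<Longrightarrow> op_zero \<in> V" by (simp add: operator_system_def)
lemma os_add: "operator_system V \<Longrightarrow> S \<in> V \<Longrightarrow> T \<in> V \<Longrightarrow> op_add S T \<in> V"
  by (simp add: operator_system_def)
lemma os_scale: "operator_system V \<Longrightarrow> T \<in> V \<Longrightarrow> op_scale c T \<in> V"
  by (simp add: operator_system_def)
lemma os_diff: "operator_system V \<Longrightarrow> S \<in> V \<Longrightarrow> T \<in> V \<Longrightarrow> op_diff S T \<in> V"
proof -
  assume V: "operator_system V" "S \<in> V" "T \<in> V"
  have "op_diff S T = op_add S (op_scale (-1) T)"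
    by (rule ext) (simp add: op_diff_def op_add_def op_scale_def scaleC_minus_left scaleC_one)
  then show ?thesis using V os_add os_scale by metis
qed

lemma os_sum: "operator_system V \<Longrightarrow> (\<And>i. i \<in> A \<Longrightarrow> f i \<in> V) \<Longrightarrow> (\<lambda>x. \<Sum>i\<in>A. f i x) \<in> V"
proof (induct A rule: infinite_finite_induct)
  case (infinite A)
  have "(\<lambda>x. \<Sum>i\<in>A. f i x) = op_zero" using infinite(1) by (simp add: op_zero_def)
  then show ?case using os_zero[OF infinite(2)] by simp
next
  case empty
  have "(\<lambda>x. \<Sum>i\<in>{}. f i x) = op_zero" by (simp add: op_zero_def)
  then show ?case using os_zero[OF empty(1)] by simp
next
  case (insert a F)
  have e: "(\<lambda>x. \<Sum>i\<in>insert a F. f i x) = op_add (f a) (\<lambda>x. \<Sum>i\<in>F. f i x)"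
    using insert(1,2) by (simp add: op_add_def)
  have 1: "f a \<in> V" using insert.prems(2) by blast
  have 2: "(\<lambda>x. \<Sum>i\<in>F. f i x) \<in> V" using insert.hyps(3)[OF insert.prems(1)] insert.prems(2) by blast
  show ?case unfolding e by (rule os_add[OF insert.prems(1) 1 2])
qed

lemma herm_hadj: "operator_system V \<Longrightarrow> x \<in> herm_mats V n \<Longrightarrow> i < n \<Longrightarrow> j < n \<Longrightarrow> hadj (x j i) (x i j)"
proof -
  assume a: "operator_system V" "x \<in> herm_mats V n" "i < n" "j < n"
  then have "x j i \<in> V" unfolding herm_mats_def mats_def by blast
  then have "x j i \<in> BH" using os_BH[OF a(1)] by blast
  then have "hadj (x j i) (adj (x j i))" by (rule adj_exists)
  moreover have "x i j = adj (x j i)" using a(2,3,4) unfolding herm_mats_def by blast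
  ultimately show ?thesis by simp
qed

lemma herm_intro:
  assumes "x \<in> mats V n" "\<And>i j. i < n \<Longrightarrow> j < n \<Longrightarrow> hadj (x j i) (x i j)"
  shows "x \<in> herm_mats V n"
proof -
  have "x i j = adj (x j i)" if "i < n" "j < n" for i j
    using adj_unique[OF assms(2)[OF that]] by simp
  then show ?thesis using assms(1) unfolding herm_mats_def by blast
qed

definition Sf :: "nat \<Rightarrow> ('a::complex_hilbert \<Rightarrow> 'a) \<Rightarrow> (nat \<Rightarrow> nat \<Rightarrow> 'a \<Rightarrow> 'a) \<Rightarrow> (nat \<Rightarrow> 'a) \<Rightarrow> complex" where
  "Sf n p X \<xi> = (\<Sum>i<n. \<Sum>j<n. cinner (p (X i j (p (\<xi> j)))) (\<xi> i))"


lemma mat_pos_Sf: "mat_pos n (\<lambda>i j. p \<circ> X i j \<circ> p) \<longleftrightarrow> (\<forall>\<xi>. Im (Sf n p X \<xi>) = 0 \<and> 0 \<le> Re (Sf n p X \<xi>))"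
  by (simp add: mat_pos_def Sf_def)


lemma Cp_iff: "x \<in> Cp V p n \<longleftrightarrow> x \<in> herm_mats V n \<and> (\<forall>\<xi>. Im (Sf n p x \<xi>) = 0 \<and> 0 \<le> Re (Sf n p x \<xi>))"
  by (simp add: Cp_def mat_pos_Sf)


lemma Sf_add: "p \<in> BH \<Longrightarrow> Sf n p (mat_add X Y) \<xi> = Sf n p X \<xi> + Sf n p Y \<xi>"
  by (simp add: Sf_def mat_add_def op_add_def BH_add cinner_add_left sum.distrib)

lemma Sf_scale: "p \<in> BH \<Longrightarrow> Sf n p (mat_scaleR t X) \<xi> = complex_of_real t * Sf n p X \<xi>"
  by (simp add: Sf_def mat_scaleR_def op_scale_def BH_scaleC cinner_scaleC_left sum_distrib_left)

lemma Sf_diff: "p \<in> BH \<Longrightarrow> Sf n p (mat_diff X Y) \<xi> = Sf n p X \<xi> - Sf n p Y \<xi>"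
  by (simp add: Sf_def mat_diff_def op_diff_def BH_diff cinner_diff_left sum_subtractf)




lemma op_add_zero: "op_add op_zero op_zero = op_zero" by (rule ext) (simp add: op_add_def op_zero_def)
lemma op_scale_zero: "op_scale c op_zero = op_zero" by (rule ext) (simp add: op_scale_def op_zero_def)
lemma op_diff_zero: "op_diff op_zero op_zero = op_zero" by (rule ext) (simp add: op_diff_def op_zero_def)

lemma Cp_add:
  assumes V: "operator_system V" and p: "p \<in> BH" and x: "x \<in> Cp V p n" and y: "y \<in> Cp V p n"
  shows "mat_add x y \<in> Cp V p n"
proof -
  have xh: "x \<in> herm_mats V n" and yh: "y \<in> herm_mats V n" using x y by (simp_all add: Cp_iff)
  have xm: "x \<in> mats V n" and ym: "y \<in> mats V n" using xh yh unfolding herm_mats_def by blast+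
  have "mat_add x y \<in> mats V n"
    unfolding mats_def mem_Collect_eq
  proof (intro conjI allI impI)
    fix i j assume "i < n" "j < n"
    then have "x i j \<in> V" "y i j \<in> V" using xm ym unfolding mats_def by blast+
    then show "mat_add x y i j \<in> V" unfolding mat_add_def using os_add[OF V] by blast
  next
    fix i j assume "\<not> (i < n \<and> j < n)"
    then have "x i j = op_zero" "y i j = op_zero" using xm ym unfolding mats_def by blast+
    then show "mat_add x y i j = op_zero" by (simp add: mat_add_def op_add_zero)
  qed
  moreover have "hadj (mat_add x y j i) (mat_add x y i j)" if "i < n" "j < n" for i j
    unfolding mat_add_def by (rule hadj_add; rule herm_hadj[OF V]) (use xh yh that in auto)
  ultimately have "mat_add x y \<in> herm_mats V n" by (rule herm_intro)
  moreover have "Im (Sf n p (mat_add x y) \<xi>) = 0 \<and> 0 \<le> Re (Sf n p (mat_add x y) \<xi>)" for \<xi>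
    using x y unfolding Cp_iff Sf_add[OF p] by simp
  ultimately show ?thesis by (simp add: Cp_iff)
qed

lemma Cp_scale:
  assumes V: "operator_system V" and p: "p \<in> BH" and x: "x \<in> Cp V p n" and t: "t \<ge> 0"
  shows "mat_scaleR t x \<in> Cp V p n"
proof -
  have xh: "x \<in> herm_mats V n" using x by (simp_all add: Cp_iff)
  have xm: "x \<in> mats V n" using xh unfolding herm_mats_def by blast+
  have "mat_scaleR t x \<in> mats V n"
    unfolding mats_def mem_Collect_eq
  proof (intro conjI allI impI)
    fix i j assume "i < n" "j < n"
    then have "x i j \<in> V" using xm unfolding mats_def by blast+
    then show "mat_scaleR t x i j \<in> V" unfolding mat_scaleR_def using os_scale[OF V] by blast
  next
    fix i j assume "\<not> (i < n \<and> j < n)"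
    then have "x i j = op_zero" using xm unfolding mats_def by blast+
    then show "mat_scaleR t x i j = op_zero" by (simp add: mat_scaleR_def op_scale_zero)
  qed
  moreover have "hadj (mat_scaleR t x j i) (mat_scaleR t x i j)" if "i < n" "j < n" for i j
    using hadj_scale[OF herm_hadj[OF V xh that], of "complex_of_real t"] unfolding mat_scaleR_def by simp
  ultimately have "mat_scaleR t x \<in> herm_mats V n" by (rule herm_intro)
  moreover have "Im (Sf n p (mat_scaleR t x) \<xi>) = 0 \<and> 0 \<le> Re (Sf n p (mat_scaleR t x) \<xi>)" for \<xi>
    using x t unfolding Cp_iff Sf_scale[OF p] by simp
  ultimately show ?thesis by (simp add: Cp_iff)
qed


lemma sum4_swap:
  "(\<Sum>k\<in>K. \<Sum>l\<in>L. \<Sum>i\<in>I. \<Sum>j\<in>J. G k l i j) = (\<Sum>i\<in>I. \<Sum>j\<in>J. \<Sum>l\<in>L. \<Sum>k\<in>K. (G k l i j :: 'b::comm_monoid_add))"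
proof -
  have 1: "(\<Sum>l\<in>L. \<Sum>i\<in>I. \<Sum>j\<in>J. G k l i j) = (\<Sum>i\<in>I. \<Sum>j\<in>J. \<Sum>l\<in>L. G k l i j)" for k
  proof -
    have "(\<Sum>l\<in>L. \<Sum>i\<in>I. \<Sum>j\<in>J. G k l i j) = (\<Sum>i\<in>I. \<Sum>l\<in>L. \<Sum>j\<in>J. G k l i j)"
      by (rule sum.swap)
    also have "\<dots> = (\<Sum>i\<in>I. \<Sum>j\<in>J. \<Sum>l\<in>L. G k l i j)"
      by (rule sum.cong[OF refl], rule sum.swap)
    finally show ?thesis .
  qed
  have "(\<Sum>k\<in>K. \<Sum>l\<in>L. \<Sum>i\<in>I. \<Sum>j\<in>J. G k l i j) = (\<Sum>k\<in>K. \<Sum>i\<in>I. \<Sum>j\<in>J. \<Sum>l\<in>L. G k l i j)"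
    using 1 by simp
  also have "\<dots> = (\<Sum>i\<in>I. \<Sum>k\<in>K. \<Sum>j\<in>J. \<Sum>l\<in>L. G k l i j)" by (rule sum.swap)
  also have "\<dots> = (\<Sum>i\<in>I. \<Sum>j\<in>J. \<Sum>k\<in>K. \<Sum>l\<in>L. G k l i j)" by (rule sum.cong[OF refl], rule sum.swap)
  also have "\<dots> = (\<Sum>i\<in>I. \<Sum>j\<in>J. \<Sum>l\<in>L. \<Sum>k\<in>K. G k l i j)"
    by (rule sum.cong[OF refl], rule sum.cong[OF refl], rule sum.swap)
  finally show ?thesis .
qed


lemma congr_entry: "k < m \<Longrightarrow> l < m \<Longrightarrow>
  congr n m \<alpha> x k l = (\<lambda>\<xi>. \<Sum>i<n. \<Sum>j<n. scaleC (cnj (\<alpha> i k) * \<alpha> j l) (x i j \<xi>))"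
  by (simp add: congr_def)

lemma Sf_congr:
  assumes p: "p \<in> BH" and xb: "\<And>i j. i < n \<Longrightarrow> j < n \<Longrightarrow> x i j \<in> BH"
  shows "Sf m p (congr n m \<alpha> x) \<xi> = Sf n p x (\<lambda>i. \<Sum>l<m. scaleC (\<alpha> i l) (\<xi> l))"
proof -
  define G where "G = (\<lambda>k l i j. (cnj (\<alpha> i k) * \<alpha> j l) * cinner (p (x i j (p (\<xi> l)))) (\<xi> k))"
  have "Sf m p (congr n m \<alpha> x) \<xi> = (\<Sum>k<m. \<Sum>l<m. \<Sum>i<n. \<Sum>j<n. G k l i j)"
    unfolding Sf_def
  proof (intro sum.cong refl)
    fix k l assume "k \<in> {..<m}" "l \<in> {..<m}"
    then show "cinner (p (congr n m \<alpha> x k l (p (\<xi> l)))) (\<xi> k) = (\<Sum>i<n. \<Sum>j<n. G k l i j)"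
      by (simp add: congr_entry G_def BH_sum[OF p] BH_scaleC[OF p] cinner_sum_left cinner_scaleC_left)
  qed
  also have "\<dots> = (\<Sum>i<n. \<Sum>j<n. \<Sum>l<m. \<Sum>k<m. G k l i j)" by (rule sum4_swap)
  also have "\<dots> = Sf n p x (\<lambda>i. \<Sum>l<m. scaleC (\<alpha> i l) (\<xi> l))"
    unfolding Sf_def
  proof (intro sum.cong refl)
    fix i j assume "i \<in> {..<n}" "j \<in> {..<n}"
    then have xij: "x i j \<in> BH" using xb by simp
    show "(\<Sum>l<m. \<Sum>k<m. G k l i j) = cinner (p (x i j (p (\<Sum>l<m. scaleC (\<alpha> j l) (\<xi> l))))) (\<Sum>l<m. scaleC (\<alpha> i l) (\<xi> l))"
      by (simp add: G_def BH_sum[OF p] BH_scaleC[OF p] BH_sum[OF xij] BH_scaleC[OF xij]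
          cinner_sum_left cinner_sum_right cinner_scaleC_left cinner_scaleC_right sum_distrib_left mult.assoc mult.left_commute)
         (rule sum.swap)
  qed
  finally show ?thesis .
qed

lemma Cp_congr:
  assumes V: "operator_system V" and p: "p \<in> BH" and x: "x \<in> Cp V p n"
  shows "congr n m \<alpha> x \<in> Cp V p m"
proof -
  have xh: "x \<in> herm_mats V n" using x by (simp_all add: Cp_iff)
  have xm: "x \<in> mats V n" using xh unfolding herm_mats_def by blast+
  have xV: "x i j \<in> V" if "i < n" "j < n" for i j using xm that unfolding mats_def by blast
  have xb: "x i j \<in> BH" if "i < n" "j < n" for i j using xV[OF that] os_BH[OF V] by blast
  have "congr n m \<alpha> x \<in> mats V m"
    unfolding mats_def mem_Collect_eq
  proof (intro conjI allI impI)
    fix k l assume kl: "k < m" "l < m"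
    have "(\<lambda>\<xi>. \<Sum>i<n. \<Sum>j<n. scaleC (cnj (\<alpha> i k) * \<alpha> j l) (x i j \<xi>)) \<in> V"
    proof (rule os_sum[OF V])
      fix i assume i: "i \<in> {..<n}"
      show "(\<lambda>\<xi>. \<Sum>j<n. scaleC (cnj (\<alpha> i k) * \<alpha> j l) (x i j \<xi>)) \<in> V"
      proof (rule os_sum[OF V])
        fix j assume j: "j \<in> {..<n}"
        have "(\<lambda>\<xi>. scaleC (cnj (\<alpha> i k) * \<alpha> j l) (x i j \<xi>)) = op_scale (cnj (\<alpha> i k) * \<alpha> j l) (x i j)"
          by (simp add: op_scale_def)
        then show "(\<lambda>\<xi>. scaleC (cnj (\<alpha> i k) * \<alpha> j l) (x i j \<xi>)) \<in> V"
          using os_scale[OF V xV] i j by simp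
      qed
    qed
    then show "congr n m \<alpha> x k l \<in> V" using kl by (simp add: congr_entry)
  next
    fix k l assume "\<not> (k < m \<and> l < m)"
    then show "congr n m \<alpha> x k l = op_zero" unfolding congr_def by (simp only: if_False)
  qed
  moreover have "hadj (congr n m \<alpha> x l k) (congr n m \<alpha> x k l)" if kl: "k < m" "l < m" for k l
  proof -
    have "hadj (\<lambda>\<xi>. \<Sum>i<n. \<Sum>j<n. scaleC (cnj (\<alpha> i l) * \<alpha> j k) (x i j \<xi>))
               (\<lambda>\<xi>. \<Sum>i<n. \<Sum>j<n. scaleC (cnj (cnj (\<alpha> i l) * \<alpha> j k)) (x j i \<xi>))"
    proof (rule hadj_sum)
      fix i assume i: "i \<in> {..<n}"
      show "hadj (\<lambda>\<xi>. \<Sum>j<n. scaleC (cnj (\<alpha> i l) * \<alpha> j k) (x i j \<xi>))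
               (\<lambda>\<xi>. \<Sum>j<n. scaleC (cnj (cnj (\<alpha> i l) * \<alpha> j k)) (x j i \<xi>))"
      proof (rule hadj_sum)
        fix j assume j: "j \<in> {..<n}"
        have "hadj (x i j) (x j i)" using herm_hadj[OF V xh, of j i] i j by simp
        then show "hadj (\<lambda>\<xi>. scaleC (cnj (\<alpha> i l) * \<alpha> j k) (x i j \<xi>))
               (\<lambda>\<xi>. scaleC (cnj (cnj (\<alpha> i l) * \<alpha> j k)) (x j i \<xi>))" by (rule hadj_scale')
      qed
    qed
    moreover have "(\<lambda>\<xi>. \<Sum>i<n. \<Sum>j<n. scaleC (cnj (cnj (\<alpha> i l) * \<alpha> j k)) (x j i \<xi>)) = congr n m \<alpha> x k l"
    proof
      fix \<xi>
      have "(\<Sum>i<n. \<Sum>j<n. scaleC (cnj (cnj (\<alpha> i l) * \<alpha> j k)) (x j i \<xi>))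
          = (\<Sum>j<n. \<Sum>i<n. scaleC (cnj (cnj (\<alpha> i l) * \<alpha> j k)) (x j i \<xi>))" by (rule sum.swap)
      also have "\<dots> = congr n m \<alpha> x k l \<xi>" using kl by (simp add: congr_entry mult.commute)
      finally show "(\<Sum>i<n. \<Sum>j<n. scaleC (cnj (cnj (\<alpha> i l) * \<alpha> j k)) (x j i \<xi>)) = congr n m \<alpha> x k l \<xi>" .
    qed
    ultimately show ?thesis using kl by (simp add: congr_entry)
  qed
  ultimately have "congr n m \<alpha> x \<in> herm_mats V m" by (rule herm_intro)
  moreover have "Im (Sf m p (congr n m \<alpha> x) \<xi>) = 0 \<and> 0 \<le> Re (Sf m p (congr n m \<alpha> x) \<xi>)" for \<xi>
    using x Sf_congr[OF p xb, where m=m and \<alpha>=\<alpha> and \<xi>=\<xi>] unfolding Cp_iff by simp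
  ultimately show ?thesis by (simp add: Cp_iff)
qed


lemma herm_Sf_Im:
  assumes V: "operator_system V" and hp: "hadj p p" and xh: "x \<in> herm_mats V n"
  shows "Im (Sf n p x \<xi>) = 0"
proof -
  define \<eta> where "\<eta> = (\<lambda>i. p (\<xi> i))"
  have S: "Sf n p x \<xi> = (\<Sum>i<n. \<Sum>j<n. cinner (x i j (\<eta> j)) (\<eta> i))"
    unfolding Sf_def \<eta>_def using hp by (simp add: hadj_def)
  have "cnj (Sf n p x \<xi>) = (\<Sum>i<n. \<Sum>j<n. cinner (\<eta> i) (x i j (\<eta> j)))"
    unfolding S by (simp add: cinner_commute[of "\<eta> _"])
  also have "\<dots> = (\<Sum>i<n. \<Sum>j<n. cinner (x j i (\<eta> i)) (\<eta> j))"
  proof (intro sum.cong refl)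
    fix i j assume "i \<in> {..<n}" "j \<in> {..<n}"
    then have "hadj (x j i) (x i j)" using herm_hadj[OF V xh] by simp
    then show "cinner (\<eta> i) (x i j (\<eta> j)) = cinner (x j i (\<eta> i)) (\<eta> j)" by (simp add: hadj_def)
  qed
  also have "\<dots> = Sf n p x \<xi>" unfolding S by (rule sum.swap)
  finally have "cnj (Sf n p x \<xi>) = Sf n p x \<xi>" .
  then have "Im (cnj (Sf n p x \<xi>)) = Im (Sf n p x \<xi>)" by simp
  then show ?thesis by simp
qed

lemma herm_Sf_Re:
  fixes x :: "nat \<Rightarrow> nat \<Rightarrow> 'a::complex_hilbert \<Rightarrow> 'a"
  assumes V: "operator_system V" and hp: "hadj p p" and xh: "x \<in> herm_mats V n"
  shows "\<exists>K\<ge>0. \<forall>\<xi>. Re (Sf n p x \<xi>) \<le> K * real n * (\<Sum>i<n. Re (cinner (p (\<xi> i)) (p (\<xi> i))))"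
proof -
  have xm: "x \<in> mats V n" using xh unfolding herm_mats_def by blast+
  have xb: "x i j \<in> BH" if "i < n" "j < n" for i j using xm that os_BH[OF V] unfolding mats_def by blast
  have ex: "\<forall>ij. \<exists>K. (fst ij < n \<and> snd ij < n) \<longrightarrow> K > 0 \<and> (\<forall>v. cnorm (x (fst ij) (snd ij) v) \<le> K * cnorm v)"
  proof
    fix ij :: "nat \<times> nat"
    show "\<exists>K. (fst ij < n \<and> snd ij < n) \<longrightarrow> K > 0 \<and> (\<forall>v. cnorm (x (fst ij) (snd ij) v) \<le> K * cnorm v)"
    proof (cases "fst ij < n \<and> snd ij < n")
      case True then show ?thesis using BH_bound[OF xb[of "fst ij" "snd ij"]] by blast
    next
      case False then show ?thesis by blast
    qed
  qed
  obtain Kp where Kp: "\<forall>ij. (fst ij < n \<and> snd ij < n) \<longrightarrow> Kp ij > 0 \<and> (\<forall>v. cnorm (x (fst ij) (snd ij) v) \<le> Kp ij * cnorm v)"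
    using choice[OF ex] by blast
  define Kf where "Kf = (\<lambda>i j. Kp (i, j))"
  have Kf: "Kf i j > 0 \<and> (\<forall>v. cnorm (x i j v) \<le> Kf i j * cnorm v)" if "i < n" "j < n" for i j
    using Kp[rule_format, of "(i, j)"] that unfolding Kf_def by simp
  define K where "K = (\<Sum>i<n. \<Sum>j<n. Kf i j)"
  have K0: "K \<ge> 0" unfolding K_def
  proof (intro sum_nonneg)
    fix i j assume "i \<in> {..<n}" "j \<in> {..<n}"
    then show "0 \<le> Kf i j" using Kf[of i j] by simp
  qed
  have KK: "Kf i j \<le> K" if "i < n" "j < n" for i j
  proof -
    have "Kf i j \<le> (\<Sum>j<n. Kf i j)" using that Kf by (intro member_le_sum) (auto simp: less_imp_le)
    also have "\<dots> \<le> K" unfolding K_def using that Kf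
      by (intro member_le_sum) (auto simp: less_imp_le intro!: sum_nonneg)
    finally show ?thesis .
  qed
  have bound: "cnorm (x i j v) \<le> K * cnorm v" if "i < n" "j < n" for i j v
    using Kf[OF that] KK[OF that] cnorm_ge0[of v] by (meson mult_right_mono order_trans)
  show ?thesis
  proof (intro exI[of _ K] conjI allI K0)
    fix \<xi> :: "nat \<Rightarrow> 'a"
    define \<eta> where "\<eta> = (\<lambda>i. p (\<xi> i))"
    define Nn where "Nn = (\<lambda>i. Re (cinner (\<eta> i) (\<eta> i)))"
    have S: "Sf n p x \<xi> = (\<Sum>i<n. \<Sum>j<n. cinner (x i j (\<eta> j)) (\<eta> i))"
      unfolding Sf_def \<eta>_def using hp by (simp add: hadj_def)
    have each: "Re (cinner (x i j (\<eta> j)) (\<eta> i)) \<le> K / 2 * (Nn j + Nn i)" if "i < n" "j < n" for i j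
    proof -
      have "Re (cinner (x i j (\<eta> j)) (\<eta> i)) \<le> cnorm (x i j (\<eta> j)) * cnorm (\<eta> i)" by (rule Re_cinner_le)
      also have "\<dots> \<le> K * cnorm (\<eta> j) * cnorm (\<eta> i)"
        using bound[OF that] cnorm_ge0[of "\<eta> i"] by (simp add: mult_right_mono)
      also have "\<dots> \<le> K / 2 * (Nn j + Nn i)"
      proof -
        have "2 * (cnorm (\<eta> j) * cnorm (\<eta> i)) \<le> (cnorm (\<eta> j))^2 + (cnorm (\<eta> i))^2"
          using sum_squares_bound[of "cnorm (\<eta> j)" "cnorm (\<eta> i)"] by (simp add: mult.assoc)
        then have "cnorm (\<eta> j) * cnorm (\<eta> i) \<le> (Nn j + Nn i) / 2" by (simp add: Nn_def cnorm_sq)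
        then have "K * (cnorm (\<eta> j) * cnorm (\<eta> i)) \<le> K * ((Nn j + Nn i) / 2)" using K0 by (rule mult_left_mono)
        then show ?thesis by (simp add: mult.assoc)
      qed
      finally show ?thesis .
    qed
    have "Re (Sf n p x \<xi>) = (\<Sum>i<n. \<Sum>j<n. Re (cinner (x i j (\<eta> j)) (\<eta> i)))" unfolding S by (simp add: Re_sum)
    also have "\<dots> \<le> (\<Sum>i<n. \<Sum>j<n. K / 2 * (Nn j + Nn i))" using each by (intro sum_mono) auto
    also have "\<dots> = (\<Sum>i<n. K / 2 * (\<Sum>j<n. Nn j) + K / 2 * (real n * Nn i))"
    proof (rule sum.cong[OF refl])
      fix i
      have h: "\<And>c::real. (\<Sum>j<n. c * (Nn j + Nn i)) = c * (\<Sum>j<n. Nn j) + c * (real n * Nn i)"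
        unfolding distrib_left sum.distrib by (simp add: sum_distrib_left[symmetric] mult_ac)
      show "(\<Sum>j<n. K / 2 * (Nn j + Nn i)) = K / 2 * (\<Sum>j<n. Nn j) + K / 2 * (real n * Nn i)"
        by (rule h)
    qed
    also have "\<dots> = K / 2 * (real n * (\<Sum>j<n. Nn j)) + K / 2 * (real n * (\<Sum>i<n. Nn i))"
    proof -
      have h: "\<And>c::real. (\<Sum>i<n. c * (\<Sum>j<n. Nn j) + c * (real n * Nn i)) = c * (real n * (\<Sum>j<n. Nn j)) + c * (real n * (\<Sum>i<n. Nn i))"
        unfolding sum.distrib by (simp add: sum_distrib_left[symmetric] mult_ac)
      show ?thesis by (rule h)
    qed
    also have "\<dots> = K * real n * (\<Sum>i<n. Nn i)"
    proof -
      have h: "\<And>T::real. K/2*(real n*T) + K/2*(real n*T) = K*real n*T" by (simp add: field_simps)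
      show ?thesis by (rule h)
    qed
    finally show "Re (Sf n p x \<xi>) \<le> K * real n * (\<Sum>i<n. Re (cinner (p (\<xi> i)) (p (\<xi> i))))"
      by (simp add: Nn_def \<eta>_def)
  qed
qed


lemma real_eps_lemma:
  fixes a b :: real
  assumes "\<And>e. e > 0 \<Longrightarrow> 0 \<le> a + e * b"
  shows "0 \<le> a"
proof (rule ccontr)
  assume "\<not> 0 \<le> a"
  then have a: "a < 0" by simp
  define e where "e = - a / (2 * (\<bar>b\<bar> + 1))"
  have e: "e > 0" unfolding e_def using a by (intro divide_pos_pos) auto
  have "e * b \<le> e * \<bar>b\<bar>" using e by (simp add: mult_left_mono)
  also have "e * \<bar>b\<bar> < - a"
  proof -
    have "e * \<bar>b\<bar> = - a * (\<bar>b\<bar> / (2 * (\<bar>b\<bar> + 1)))" unfolding e_def by simp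
    also have "\<dots> < - a * 1"
      using a by (intro mult_strict_left_mono) (simp_all add: divide_less_eq)
    finally show ?thesis by simp
  qed
  finally show False using assms[OF e] by simp
qed

lemma ampl_V: "operator_system V \<Longrightarrow> q \<in> V \<Longrightarrow> ampl n q i j \<in> V"
  by (simp add: ampl_def os_zero)

lemma Sf_ampl:
  assumes p: "p \<in> BH"
  shows "Sf n p (ampl n q) \<xi> = (\<Sum>i<n. cinner (p (q (p (\<xi> i)))) (\<xi> i))"
  unfolding Sf_def
proof (rule sum.cong[OF refl])
  fix i assume i: "i \<in> {..<n}"
  have "(\<Sum>j<n. cinner (p (ampl n q i j (p (\<xi> j)))) (\<xi> i))
      = (\<Sum>j<n. if i = j then cinner (p (q (p (\<xi> i)))) (\<xi> i) else 0)"
    using i by (intro sum.cong refl) (simp add: ampl_def op_zero_def BH_zero[OF p])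
  also have "\<dots> = cinner (p (q (p (\<xi> i)))) (\<xi> i)" using i by simp
  finally show "(\<Sum>j<n. cinner (p (ampl n q i j (p (\<xi> j)))) (\<xi> i)) = cinner (p (q (p (\<xi> i)))) (\<xi> i)" .
qed

lemma unit_part:
  fixes V :: "('h::complex_hilbert \<Rightarrow> 'h) set" and p :: "'h \<Rightarrow> 'h"
  assumes V: "operator_system V" and pV: "p \<in> V" and proj: "is_projection p"
    and qV: "q \<in> V" and pq: "op_le p q"
  shows "archimedean_matrix_order_unit V (Cp V p) q"
proof -
  have pB: "p \<in> BH" using proj by (simp add: is_projection_def)
  have pp: "p (p y) = p y" for y
  proof -
    have "p \<circ> p = p" using proj by (simp add: is_projection_def)
    then show ?thesis by (metis comp_apply)
  qed
  have hp: "hadj p p" using adj_exists[OF pB] proj by (simp add: is_projection_def)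
  have qB: "q \<in> BH" using qV os_BH[OF V] by blast
  have posqp: "op_pos (op_diff q p)" using pq by (simp add: op_le_def)
  have hq: "hadj q q"
  proof -
    have "hadj (op_add (op_diff q p) p) (op_add (op_diff q p) p)"
      using hadj_add[OF op_pos_hadj[OF posqp] hp] .
    moreover have "op_add (op_diff q p) p = q" by (rule ext) (simp add: op_add_def op_diff_def)
    ultimately show ?thesis by simp
  qed
  have qdiag: "Im (cinner (p (q (p y))) y) = 0 \<and> Re (cinner (p y) (p y)) \<le> Re (cinner (p (q (p y))) y)" for y
  proof -
    have e2: "q (p y) = op_diff q p (p y) + p y" by (simp add: op_diff_def pp)
    have "cinner (p (q (p y))) y = cinner (q (p y)) (p y)" using hp by (simp add: hadj_def)
    also have "\<dots> = cinner (op_diff q p (p y) + p y) (p y)" by (subst e2) (rule refl)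
    also have "\<dots> = cinner (op_diff q p (p y)) (p y) + cinner (p y) (p y)" by (rule cinner_add_left)
    finally have e: "cinner (p (q (p y))) y = cinner (op_diff q p (p y)) (p y) + cinner (p y) (p y)" .
    have "Im (cinner (op_diff q p (p y)) (p y)) = 0" "0 \<le> Re (cinner (op_diff q p (p y)) (p y))"
      using posqp by (simp_all add: op_pos_def)
    then show ?thesis unfolding e by simp
  qed
  have amplSf: "Im (Sf n p (ampl n q) \<xi>) = 0 \<and> (\<Sum>i<n. Re (cinner (p (\<xi> i)) (p (\<xi> i)))) \<le> Re (Sf n p (ampl n q) \<xi>)"
    for n \<xi>
    unfolding Sf_ampl[OF pB] using qdiag by (simp add: Im_sum Re_sum sum_mono)
  have ampl_h: "hadj (ampl n q j i) (ampl n q i j)" for n i j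
    by (simp add: ampl_def hq hadj_zero)
  show ?thesis
    unfolding archimedean_matrix_order_unit_def
  proof (intro conjI allI impI ballI qV)
    fix n :: nat and x assume xh: "x \<in> herm_mats V n"
    have xm: "x \<in> mats V n" using xh unfolding herm_mats_def by blast
    obtain K where K: "K \<ge> 0" "\<And>\<xi>. Re (Sf n p x \<xi>) \<le> K * real n * (\<Sum>i<n. Re (cinner (p (\<xi> i)) (p (\<xi> i))))"
      using herm_Sf_Re[OF V hp xh] by blast
    define r where "r = K * real n + 1"
    have "K * real n \<ge> 0" using K(1) by simp
    then have r: "r > 0" unfolding r_def by linarith
    define y where "y = mat_diff (mat_scaleR r (ampl n q)) x"
    have "y \<in> mats V n"
      unfolding mats_def mem_Collect_eq
    proof (intro conjI allI impI)
      fix i j assume "i < n" "j < n"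
      then have "x i j \<in> V" using xm unfolding mats_def by blast
      then show "y i j \<in> V" unfolding y_def mat_diff_def mat_scaleR_def
        using os_diff[OF V] os_scale[OF V] ampl_V[OF V qV] by blast
    next
      fix i j assume ij: "\<not> (i < n \<and> j < n)"
      then have "x i j = op_zero" using xm unfolding mats_def by blast
      moreover have "ampl n q i j = op_zero" using ij by (auto simp: ampl_def)
      ultimately show "y i j = op_zero" by (simp add: y_def mat_diff_def mat_scaleR_def op_scale_zero op_diff_zero)
    qed
    moreover have "hadj (y j i) (y i j)" if "i < n" "j < n" for i j
      unfolding y_def mat_diff_def mat_scaleR_def
      using hadj_diff[OF hadj_scale[OF ampl_h, of "complex_of_real r"] herm_hadj[OF V xh that]] by simp
    ultimately have yh: "y \<in> herm_mats V n" by (rule herm_intro)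
    have "Im (Sf n p y \<xi>) = 0 \<and> 0 \<le> Re (Sf n p y \<xi>)" for \<xi>
    proof -
      have e: "Sf n p y \<xi> = complex_of_real r * Sf n p (ampl n q) \<xi> - Sf n p x \<xi>"
        unfolding y_def Sf_diff[OF pB] Sf_scale[OF pB] ..
      have i1: "Im (Sf n p x \<xi>) = 0" by (rule herm_Sf_Im[OF V hp xh])
      define Q where "Q = (\<Sum>i<n. Re (cinner (p (\<xi> i)) (p (\<xi> i))))"
      have Q: "Q \<le> Re (Sf n p (ampl n q) \<xi>)" "Im (Sf n p (ampl n q) \<xi>) = 0" using amplSf unfolding Q_def by auto
      have Q0: "Q \<ge> 0" unfolding Q_def by (intro sum_nonneg) (simp add: cinner_ge_zero)
      have "K * real n * Q \<le> r * Q" unfolding r_def using Q0 by (simp add: distrib_right)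
      also have "\<dots> \<le> r * Re (Sf n p (ampl n q) \<xi>)" using Q(1) r by simp
      finally have "Re (Sf n p x \<xi>) \<le> r * Re (Sf n p (ampl n q) \<xi>)" using K(2)[of \<xi>] unfolding Q_def by linarith
      then show ?thesis unfolding e using i1 Q(2) by simp
    qed
    then show "\<exists>r>0. mat_diff (mat_scaleR r (ampl n q)) x \<in> Cp V p n"
      using r yh unfolding y_def Cp_iff by blast
  next
    fix n :: nat and x assume xh: "x \<in> herm_mats V n"
      and H: "\<forall>\<epsilon>>0. mat_add x (mat_scaleR \<epsilon> (ampl n q)) \<in> Cp V p n"
    have e: "Sf n p (mat_add x (mat_scaleR \<epsilon> (ampl n q))) \<xi> = Sf n p x \<xi> + complex_of_real \<epsilon> * Sf n p (ampl n q) \<xi>"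
      for \<epsilon> \<xi> by (simp add: Sf_add[OF pB] Sf_scale[OF pB])
    have P: "Im (Sf n p x \<xi>) + \<epsilon> * Im (Sf n p (ampl n q) \<xi>) = 0 \<and> 0 \<le> Re (Sf n p x \<xi>) + \<epsilon> * Re (Sf n p (ampl n q) \<xi>)"
      if "\<epsilon> > 0" for \<epsilon> \<xi>
    proof -
      have a: "Im (Sf n p (mat_add x (mat_scaleR \<epsilon> (ampl n q))) \<xi>) = 0 \<and> 0 \<le> Re (Sf n p (mat_add x (mat_scaleR \<epsilon> (ampl n q))) \<xi>)"
      proof -
        have "mat_add x (mat_scaleR \<epsilon> (ampl n q)) \<in> Cp V p n" using H that by simp
        then have "\<forall>\<xi>. Im (Sf n p (mat_add x (mat_scaleR \<epsilon> (ampl n q))) \<xi>) = 0 \<and> 0 \<le> Re (Sf n p (mat_add x (mat_scaleR \<epsilon> (ampl n q))) \<xi>)"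
          unfolding Cp_iff by (rule conjunct2)
        then show ?thesis by (rule spec)
      qed
      then show ?thesis unfolding e by simp
    qed
    have "Im (Sf n p x \<xi>) = 0 \<and> 0 \<le> Re (Sf n p x \<xi>)" for \<xi>
    proof
      show "0 \<le> Re (Sf n p x \<xi>)"
      proof (rule real_eps_lemma)
        fix e :: real assume "e > 0"
        from P[OF this, of \<xi>] show "0 \<le> Re (Sf n p x \<xi>) + e * Re (Sf n p (ampl n q) \<xi>)" by (rule conjunct2)
      qed
      have "Im (Sf n p x \<xi>) + 1 * Im (Sf n p (ampl n q) \<xi>) = 0" using P[of 1 \<xi>] by simp
      moreover have "Im (Sf n p x \<xi>) + 2 * Im (Sf n p (ampl n q) \<xi>) = 0" using P[of 2 \<xi>] by simp
      ultimately show "Im (Sf n p x \<xi>) = 0" by linarith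
    qed
    then show "x \<in> Cp V p n" using xh unfolding Cp_iff by blast
  qed
qed

theorem proposition3p1:
  fixes V :: "('h::complex_hilbert \<Rightarrow> 'h) set" and p :: "'h \<Rightarrow> 'h"
  assumes "operator_system V" and "p \<in> V" and "is_projection p"
  shows "matrix_ordering V (Cp V p) \<and>
    (\<forall>q\<in>V. op_le p q \<and> op_le q id \<longrightarrow> archimedean_matrix_order_unit V (Cp V p) q)"
proof
  have pB: "p \<in> BH" using assms(3) by (simp add: is_projection_def)
  show "matrix_ordering V (Cp V p)"
    unfolding matrix_ordering_def is_cone_def
  proof (intro allI impI conjI ballI)
    fix n :: nat
    show "Cp V p n \<subseteq> herm_mats V n" by (auto simp: Cp_iff)
    show "\<And>x y. x \<in> Cp V p n \<Longrightarrow> y \<in> Cp V p n \<Longrightarrow> mat_add x y \<in> Cp V p n"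
      by (rule Cp_add[OF assms(1) pB])
    show "\<And>t x. 0 \<le> t \<Longrightarrow> x \<in> Cp V p n \<Longrightarrow> mat_scaleR t x \<in> Cp V p n"
      by (rule Cp_scale[OF assms(1) pB])
    show "\<And>m \<alpha> x. 1 \<le> m \<Longrightarrow> \<alpha> \<in> scalar_mats n m \<Longrightarrow> x \<in> Cp V p n \<Longrightarrow> congr n m \<alpha> x \<in> Cp V p m"
      by (rule Cp_congr[OF assms(1) pB])
  qed
  show "\<forall>q\<in>V. op_le p q \<and> op_le q id \<longrightarrow> archimedean_matrix_order_unit V (Cp V p) q"
    using unit_part[OF assms] by blast
qed


end
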